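(* Let $C\in\mathbb{R}^{N\times N}$ be a symmetric positive definite matrix, and let $\{1,\dots,N\}=\mathcal S\cup\mathcal S'$ be a partition into disjoint nonempty sets, with block decomposition $C=\begin{bmatrix} C_{\mathcal S} & C_{\mathcal S\mathcal S'}\\ C_{\mathcal S'\mathcal S} & C_{\mathcal S'}\end{bmatrix}$, where $C_{\mathcal S},C_{\mathcal S'}\succ 0$. For $\lambda>0$ define \[ R_{\mathcal S}(\lambda):=(C_{\mathcal S}+\lambda I)^{-1}-\big[(C+\lambda I)^{-1}\big]_{\mathcal S}, \] where $[M]_{\mathcal S}$ denotes the principal submatrix of $M$ indexed by $\mathcal S$. Define \[ \theta:=\frac{\|C_{\mathcal S\mathcal S'}\|^2}{\lambda_{\min}(C_{\mathcal S})\,\lambda_{\min}(C_{\mathcal S'})}. \] If $\theta<1$, then for all $\lambda>0$, \[ \|R_{\mathcal S}(\lambda)\|\le \frac{\|C_{\mathcal S\mathcal S'}\|^2}{(1-\theta)\,(\lambda_{\min}(C)+\lambda)^3}. \]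
   Context: $\|\cdot\|$ denotes the spectral (operator $2$-) norm and $\lambda_{\min}(\cdot)$ the smallest eigenvalue of a symmetric matrix. $C_{\mathcal S}$, $C_{\mathcal S'}$ are the principal submatrices of $C$ on $\mathcal S$ and $\mathcal S'$, and $C_{\mathcal S\mathcal S'}$ is the submatrix with rows in $\mathcal S$ and columns in $\mathcal S'$. *)

theory Defs
  imports "Jordan_Normal_Form.Char_Poly" "Jordan_Normal_Form.DL_Submatrix"
begin

text \<open>Matrices are JNF matrices with 0-based indices; an N x N matrix has index set {0..<N}.\<close>

definition sym_mat :: "real mat \<Rightarrow> bool" where
  "sym_mat A \<longleftrightarrow> A\<^sup>T = A"

definition pos_def :: "real mat \<Rightarrow> bool" where
  "pos_def A \<longleftrightarrow> A \<in> carrier_mat (dim_row A) (dim_row A) \<and> sym_mat A \<and>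
     (\<forall>x \<in> carrier_vec (dim_row A). x \<noteq> 0\<^sub>v (dim_row A) \<longrightarrow> x \<bullet> (A *\<^sub>v x) > 0)"

definition vnorm :: "real vec \<Rightarrow> real" where
  "vnorm x = sqrt (x \<bullet> x)"

definition spec_norm :: "real mat \<Rightarrow> real" where
  "spec_norm A = Sup {vnorm (A *\<^sub>v x) | x. x \<in> carrier_vec (dim_col A) \<and> vnorm x = 1}"

text \<open>Smallest eigenvalue (of a symmetric matrix, whose eigenvalues are all real).\<close>
definition lambda_min :: "real mat \<Rightarrow> real" where
  "lambda_min A = Min {k. eigenvalue A k}"

definition mat_inv :: "real mat \<Rightarrow> real mat" where
  "mat_inv A = (SOME B. B \<in> carrier_mat (dim_row A) (dim_row A) \<and> inverts_mat A B \<and> inverts_mat B A)"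

abbreviation principal_sub :: "real mat \<Rightarrow> nat set \<Rightarrow> real mat" where
  "principal_sub M S \<equiv> submatrix M S S"

definition R_S :: "real mat \<Rightarrow> nat set \<Rightarrow> real \<Rightarrow> real mat" where
  "R_S C S lam = mat_inv (principal_sub C S + lam \<cdot>\<^sub>m 1\<^sub>m (card S))
      - principal_sub (mat_inv (C + lam \<cdot>\<^sub>m 1\<^sub>m (dim_row C))) S"

end

theory Submission
  imports Defs
begin

lemma inv_exists:
  fixes A :: "real mat"
  assumes A: "A \<in> carrier_mat n n" and d: "det A \<noteq> 0"
  shows "mat_inv A \<in> carrier_mat n n \<and> A * mat_inv A = 1\<^sub>m n \<and> mat_inv A * A = 1\<^sub>m n"
proof -
  from det_non_zero_imp_unit[OF A d, of "()"]
  obtain B where B: "B \<in> carrier_mat n n" "A * B = 1\<^sub>m n" "B * A = 1\<^sub>m n"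
    unfolding Units_def ring_mat_def by auto
  have "\<exists>B. B \<in> carrier_mat (dim_row A) (dim_row A) \<and> inverts_mat A B \<and> inverts_mat B A"
    using A B unfolding inverts_mat_def by auto
  from someI_ex[OF this] show ?thesis using A unfolding mat_inv_def inverts_mat_def by auto
qed

lemma sp_self_nonneg: "0 \<le> (x::real vec) \<bullet> x"
  apply (simp only: scalar_prod_def)
  apply (intro sum_nonneg)
  apply simp
  done

lemma vnorm_nonneg: "0 \<le> vnorm x" unfolding vnorm_def using sp_self_nonneg[of x] by simp

lemma vnorm_sq: "vnorm x ^ 2 = x \<bullet> x" unfolding vnorm_def using sp_self_nonneg by simp

lemma quad_disc: fixes a b c :: real
  assumes "\<And>t. 0 \<le> a + 2*t*b + t^2*c" "0 \<le> c"
  shows "b^2 \<le> a*c"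
proof (cases "c = 0")
  case True
  have "b = 0" proof (rule ccontr)
    assume "b \<noteq> 0"
    from assms(1)[of "-(a+1)/(2*b)"] show False using True \<open>b\<noteq>0\<close> by (simp add: field_simps)
  qed
  then show ?thesis using True by simp
next
  case False
  hence c: "c > 0" using assms(2) by simp
  from assms(1)[of "-b/c"] have "0 \<le> a - b^2/c" using c by (simp add: field_simps power2_eq_square)
  then show ?thesis using c by (simp add: field_simps)
qed

lemma cs_sq:
  fixes x y :: "real vec"
  assumes x: "x \<in> carrier_vec n" and y: "y \<in> carrier_vec n"
  shows "(x \<bullet> y)^2 \<le> (x \<bullet> x) * (y \<bullet> y)"
proof (rule quad_disc)
  fix t :: real
  have "0 \<le> (\<Sum>i\<in>{0..<n}. (x$i + t*y$i)^2)" by (auto intro: sum_nonneg)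
  also have "(\<Sum>i\<in>{0..<n}. (x$i + t*y$i)^2) = x \<bullet> x + 2*t*(x \<bullet> y) + t^2*(y \<bullet> y)"
    using x y unfolding scalar_prod_def
    by (simp add: power2_eq_square sum.distrib sum_distrib_left algebra_simps)
  finally show "0 \<le> x \<bullet> x + 2*t*(x \<bullet> y) + t^2*(y \<bullet> y)" .
qed (rule sp_self_nonneg)

lemma cs:
  fixes x y :: "real vec"
  assumes x: "x \<in> carrier_vec n" and y: "y \<in> carrier_vec n"
  shows "\<bar>x \<bullet> y\<bar> \<le> vnorm x * vnorm y"
proof -
  have "sqrt ((x \<bullet> y)^2) \<le> sqrt ((x \<bullet> x) * (y \<bullet> y))"
    using cs_sq[OF x y] by (rule real_sqrt_le_mono)
  thus ?thesis unfolding vnorm_def by (simp add: real_sqrt_mult)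
qed

lemma vnorm_smult: "vnorm (c \<cdot>\<^sub>v x) = \<bar>c\<bar> * vnorm x"
proof -
  have "(c \<cdot>\<^sub>v x) \<bullet> (c \<cdot>\<^sub>v x) = c^2 * (x \<bullet> x)"
    unfolding scalar_prod_def by (simp add: sum_distrib_left power2_eq_square algebra_simps)
  thus ?thesis unfolding vnorm_def by (simp add: real_sqrt_mult)
qed

lemma matvec_bound:
  fixes A :: "real mat"
  assumes A: "A \<in> carrier_mat nr nc"
  shows "\<exists>K\<ge>0. \<forall>x\<in>carrier_vec nc. vnorm (A *\<^sub>v x) \<le> K * vnorm x"
proof -
  define K2 where "K2 = (\<Sum>i\<in>{0..<nr}. row A i \<bullet> row A i)"
  have K2: "K2 \<ge> 0" unfolding K2_def by (auto intro: sum_nonneg sp_self_nonneg)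
  have "vnorm (A *\<^sub>v x) \<le> sqrt K2 * vnorm x" if x: "x \<in> carrier_vec nc" for x
  proof -
    have "(A *\<^sub>v x) \<bullet> (A *\<^sub>v x) = (\<Sum>i\<in>{0..<nr}. (row A i \<bullet> x)^2)"
      using A unfolding scalar_prod_def[of "A *\<^sub>v x"] by (simp add: power2_eq_square)
    also have "\<dots> \<le> (\<Sum>i\<in>{0..<nr}. (row A i \<bullet> row A i) * (x \<bullet> x))"
      by (rule sum_mono, rule cs_sq[of _ nc], insert A x, auto)
    also have "\<dots> = K2 * (x \<bullet> x)" unfolding K2_def by (simp add: sum_distrib_right)
    finally have "sqrt ((A *\<^sub>v x) \<bullet> (A *\<^sub>v x)) \<le> sqrt (K2 * (x \<bullet> x))" by (rule real_sqrt_le_mono)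
    thus ?thesis unfolding vnorm_def by (simp add: real_sqrt_mult)
  qed
  thus ?thesis using K2 by (intro exI[of _ "sqrt K2"]) auto
qed

lemma vnorm_unit_vec: "i < n \<Longrightarrow> vnorm (unit_vec n i) = 1"
proof -
  assume i: "i < n"
  have "(\<Sum>j\<in>{0..<n}. (if j = i then 1 else 0) * (if j = i then 1 else (0::real))) = (\<Sum>j\<in>{0..<n}. if j = i then 1 else 0)"
    by (rule sum.cong) auto
  thus ?thesis unfolding vnorm_def scalar_prod_def using i by (simp add: unit_vec_def)
qed

lemma spec_norm_le:
  fixes A :: "real mat"
  assumes A: "A \<in> carrier_mat nr nc" and nc: "0 < nc"
    and b: "\<And>x. x \<in> carrier_vec nc \<Longrightarrow> vnorm x = 1 \<Longrightarrow> vnorm (A *\<^sub>v x) \<le> c"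
  shows "spec_norm A \<le> c"
  unfolding spec_norm_def
proof (rule cSup_least)
  show "{vnorm (A *\<^sub>v x) |x. x \<in> carrier_vec (dim_col A) \<and> vnorm x = 1} \<noteq> {}"
    using A nc vnorm_unit_vec[OF nc] by (auto intro!: exI[of _ "unit_vec nc 0"])
qed (use A b in auto)

lemma spec_norm_bound:
  fixes A :: "real mat"
  assumes A: "A \<in> carrier_mat nr nc" and x: "x \<in> carrier_vec nc"
  shows "vnorm (A *\<^sub>v x) \<le> spec_norm A * vnorm x"
proof -
  obtain K where K: "K \<ge> 0" "\<And>x. x\<in>carrier_vec nc \<Longrightarrow> vnorm (A *\<^sub>v x) \<le> K * vnorm x"
    using matvec_bound[OF A] by auto
  let ?S = "{vnorm (A *\<^sub>v x) |x. x \<in> carrier_vec (dim_col A) \<and> vnorm x = 1}"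
  have bdd: "bdd_above ?S" using K A by (auto intro!: bdd_aboveI[of _ K] simp: K(2))
    (metis K(2) mult.right_neutral)
  show ?thesis
  proof (cases "vnorm x = 0")
    case True
    then show ?thesis using K(2)[OF x] vnorm_nonneg[of "A *\<^sub>v x"] by simp
  next
    case False
    hence pos: "vnorm x > 0" using vnorm_nonneg[of x] by simp
    define u where "u = (1 / vnorm x) \<cdot>\<^sub>v x"
    have u: "u \<in> carrier_vec nc" "vnorm u = 1" unfolding u_def using x pos
      by (auto simp: vnorm_smult)
    have "A *\<^sub>v u = (1 / vnorm x) \<cdot>\<^sub>v (A *\<^sub>v x)" unfolding u_def
      using A x by (simp add: mult_mat_vec)
    hence "vnorm (A *\<^sub>v u) = vnorm (A *\<^sub>v x) / vnorm x" using pos by (simp add: vnorm_smult)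
    moreover have "vnorm (A *\<^sub>v u) \<le> spec_norm A" unfolding spec_norm_def
      by (rule cSup_upper[OF _ bdd], insert u A, auto)
    ultimately show ?thesis using pos by (simp add: field_simps)
      (metis mult.commute mult_left_mono less_imp_le)
  qed
qed

lemma sym_quad:
  fixes A :: "real mat"
  assumes A: "A \<in> carrier_mat n n" and s: "sym_mat A"
    and x: "x \<in> carrier_vec n" and y: "y \<in> carrier_vec n"
  shows "x \<bullet> (A *\<^sub>v y) = y \<bullet> (A *\<^sub>v x)"
proof -
  have Aij: "A $$ (i,j) = A $$ (j,i)" if "i < n" "j < n" for i j
  proof -
    have "A\<^sup>T $$ (j,i) = A $$ (i,j)" using that A by simp
    thus ?thesis using s unfolding sym_mat_def by simp
  qed
  have "x \<bullet> (A *\<^sub>v y) = (\<Sum>i\<in>{0..<n}. \<Sum>j\<in>{0..<n}. x$i * A$$(i,j) * y$j)"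
    using A x y by (simp add: scalar_prod_def row_def sum_distrib_left algebra_simps)
  also have "\<dots> = (\<Sum>j\<in>{0..<n}. \<Sum>i\<in>{0..<n}. x$i * A$$(i,j) * y$j)" by (rule sum.swap)
  also have "\<dots> = (\<Sum>j\<in>{0..<n}. \<Sum>i\<in>{0..<n}. y$j * A$$(j,i) * x$i)"
    by (intro sum.cong refl, simp add: Aij)
  also have "\<dots> = y \<bullet> (A *\<^sub>v x)"
    using A x y by (simp add: scalar_prod_def row_def sum_distrib_left algebra_simps)
  finally show ?thesis .
qed

lemma quad_expand:
  fixes A :: "real mat"
  assumes A: "A \<in> carrier_mat n n" and s: "sym_mat A"
    and x: "x \<in> carrier_vec n" and y: "y \<in> carrier_vec n"
  shows "(x + t \<cdot>\<^sub>v y) \<bullet> (A *\<^sub>v (x + t \<cdot>\<^sub>v y))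
     = x \<bullet> (A *\<^sub>v x) + 2*t*(x \<bullet> (A *\<^sub>v y)) + t^2*(y \<bullet> (A *\<^sub>v y))"
proof -
  have ax: "A *\<^sub>v x \<in> carrier_vec n" "A *\<^sub>v y \<in> carrier_vec n" using A x y by auto
  have "A *\<^sub>v (x + t \<cdot>\<^sub>v y) = A *\<^sub>v x + t \<cdot>\<^sub>v (A *\<^sub>v y)"
    using A x y by (simp add: mult_add_distrib_mat_vec[of A n n] mult_mat_vec)
  hence "(x + t \<cdot>\<^sub>v y) \<bullet> (A *\<^sub>v (x + t \<cdot>\<^sub>v y))
     = x \<bullet> (A *\<^sub>v x) + t*(x \<bullet> (A *\<^sub>v y)) + t*(y \<bullet> (A *\<^sub>v x)) + t^2*(y \<bullet> (A *\<^sub>v y))"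
    using x y ax
    by (simp add: add_scalar_prod_distrib[of _ n] scalar_prod_add_distrib[of _ n] power2_eq_square algebra_simps)
  thus ?thesis using sym_quad[OF A s x y] by simp
qed

lemma psd_cs:
  fixes A :: "real mat"
  assumes A: "A \<in> carrier_mat n n" and s: "sym_mat A"
    and psd: "\<And>z. z \<in> carrier_vec n \<Longrightarrow> 0 \<le> z \<bullet> (A *\<^sub>v z)"
    and x: "x \<in> carrier_vec n" and y: "y \<in> carrier_vec n"
  shows "(x \<bullet> (A *\<^sub>v y))^2 \<le> (x \<bullet> (A *\<^sub>v x)) * (y \<bullet> (A *\<^sub>v y))"
proof (rule quad_disc)
  fix t :: real
  show "0 \<le> x \<bullet> (A *\<^sub>v x) + 2*t*(x \<bullet> (A *\<^sub>v y)) + t^2*(y \<bullet> (A *\<^sub>v y))"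
    using psd[of "x + t \<cdot>\<^sub>v y"] quad_expand[OF A s x y, of t] x y by auto
qed (rule psd[OF y])

lemma sp_zero_left: "x \<in> carrier_vec n \<Longrightarrow> 0\<^sub>v n \<bullet> (x::real vec) = 0"
  by (simp add: scalar_prod_def)

lemma sum_delta_nat: "(i::nat) < n \<Longrightarrow> (\<Sum>j\<in>{0..<n}. c * (if i = j then 1 else 0) * (f j::real)) = c * f i"
proof -
  assume i: "i < n"
  have "(\<Sum>j\<in>{0..<n}. c * (if i = j then 1 else 0) * (f j::real)) = (\<Sum>j\<in>{0..<n}. if j = i then c * f j else 0)"
    by (rule sum.cong) auto
  also have "\<dots> = c * f i" using i by (subst sum.delta) auto
  finally show ?thesis .
qed

lemma smult_one_mat_vec: "x \<in> carrier_vec n \<Longrightarrow> (k \<cdot>\<^sub>m 1\<^sub>m n) *\<^sub>v x = (k::real) \<cdot>\<^sub>v x"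
  by (intro eq_vecI) (auto simp: scalar_prod_def row_def sum_delta_nat)

lemma rayleigh:
  fixes A :: "real mat"
  assumes A: "A \<in> carrier_mat n n" and pd: "pos_def A" and n: "0 < n"
  shows "0 < lambda_min A \<and> (\<forall>x\<in>carrier_vec n. lambda_min A * (x \<bullet> x) \<le> x \<bullet> (A *\<^sub>v x))"
proof -
  have s: "sym_mat A" using pd unfolding pos_def_def by auto
  have pdx: "0 < x \<bullet> (A *\<^sub>v x)" if "x \<in> carrier_vec n" "x \<noteq> 0\<^sub>v n" for x
    using pd that A unfolding pos_def_def by auto
  have psd0: "0 \<le> x \<bullet> (A *\<^sub>v x)" if x: "x \<in> carrier_vec n" for x
  proof (cases "x = 0\<^sub>v n")
    case True thus ?thesis using A by (simp add: sp_zero_left)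
  next
    case False thus ?thesis using pdx[OF x] by simp
  qed
  define Q where "Q = {x \<bullet> (A *\<^sub>v x) | x. x \<in> carrier_vec n \<and> x \<bullet> x = 1}"
  define mu where "mu = Inf Q"
  have Qne: "Q \<noteq> {}" unfolding Q_def using vnorm_unit_vec[OF n] unfolding vnorm_def
    by (auto intro!: exI[of _ "unit_vec n 0"])
  have Qbdd: "bdd_below Q" unfolding Q_def using psd0 by (auto intro!: bdd_belowI[of _ 0])
  have mu_le: "mu * (x \<bullet> x) \<le> x \<bullet> (A *\<^sub>v x)" if x: "x \<in> carrier_vec n" for x
  proof (cases "x \<bullet> x = 0")
    case True thus ?thesis using psd0[OF x] by simp
  next
    case False
    hence pos: "x \<bullet> x > 0" using sp_self_nonneg[of x] by simp
    define c where "c = 1 / vnorm x"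
    have c2: "c^2 = 1 / (x \<bullet> x)" unfolding c_def vnorm_def using pos
      by (simp add: power_divide)
    define u where "u = c \<cdot>\<^sub>v x"
    have u: "u \<in> carrier_vec n" unfolding u_def using x by simp
    have uu: "u \<bullet> u = c^2 * (x \<bullet> x)" unfolding u_def using x
      by (simp add: power2_eq_square)
    hence uu1: "u \<bullet> u = 1" using c2 pos by simp
    have uAu: "u \<bullet> (A *\<^sub>v u) = c^2 * (x \<bullet> (A *\<^sub>v x))" unfolding u_def using x A
      by (simp add: mult_mat_vec power2_eq_square)
    have "mu \<le> u \<bullet> (A *\<^sub>v u)" unfolding mu_def
      by (rule cInf_lower[OF _ Qbdd], unfold Q_def, insert u uu1, auto)
    thus ?thesis using uAu c2 pos by (simp add: field_simps)
  qed
  define M where "M = char_matrix A mu"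
  have M: "M \<in> carrier_mat n n" unfolding M_def char_matrix_def using A by simp
  have Mx: "M *\<^sub>v x = A *\<^sub>v x + (-mu) \<cdot>\<^sub>v x" if x: "x \<in> carrier_vec n" for x
    unfolding M_def char_matrix_def using A x
    by (simp add: add_mult_distrib_mat_vec[of A n n] smult_one_mat_vec)
  have Ms: "sym_mat M" using s A unfolding M_def char_matrix_def sym_mat_def
    by (subst transpose_add[of _ n n], auto intro!: eq_matI)
  have xMx: "x \<bullet> (M *\<^sub>v x) = x \<bullet> (A *\<^sub>v x) - mu * (x \<bullet> x)" if x: "x \<in> carrier_vec n" for x
    using x A by (simp add: Mx scalar_prod_add_distrib[of x n])
  have Mpsd: "0 \<le> z \<bullet> (M *\<^sub>v z)" if z: "z \<in> carrier_vec n" for z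
    using xMx[OF z] mu_le[OF z] by simp
  have detM: "det M = 0"
  proof (rule ccontr)
    assume d: "det M \<noteq> 0"
    define Mi where "Mi = mat_inv M"
    have Mi: "Mi \<in> carrier_mat n n" "Mi * M = 1\<^sub>m n" using inv_exists[OF M d] unfolding Mi_def by auto
    obtain K1 where K1: "K1 \<ge> 0" "\<And>x. x\<in>carrier_vec n \<Longrightarrow> vnorm (Mi *\<^sub>v x) \<le> K1 * vnorm x"
      using matvec_bound[OF Mi(1)] by auto
    obtain K2 where K2: "K2 \<ge> 0" "\<And>x. x\<in>carrier_vec n \<Longrightarrow> vnorm (M *\<^sub>v x) \<le> K2 * vnorm x"
      using matvec_bound[OF M] by auto
    define K where "K = K1^2 * K2 + 1"
    have "0 \<le> K1^2 * K2" using K2 by simp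
    hence Kpos: "K > 0" unfolding K_def by linarith
    have key: "mu + 1 / K \<le> x \<bullet> (A *\<^sub>v x)" if x: "x \<in> carrier_vec n" and xx: "x \<bullet> x = 1" for x
    proof -
      define y where "y = M *\<^sub>v x"
      have y: "y \<in> carrier_vec n" unfolding y_def using M x by simp
      have "Mi *\<^sub>v y = x" unfolding y_def using Mi M x
        by (simp add: assoc_mult_mat_vec[symmetric, of Mi n n M n])
      hence "vnorm x \<le> K1 * vnorm y" using K1(2)[OF y] by simp
      hence "vnorm x ^ 2 \<le> (K1 * vnorm y)^2" using vnorm_nonneg[of x] by (rule power_mono)
      hence x1: "1 \<le> K1^2 * (y \<bullet> y)" using xx by (simp add: vnorm_sq power_mult_distrib)
      have cs1: "(y \<bullet> (M *\<^sub>v x))^2 \<le> (y \<bullet> (M *\<^sub>v y)) * (x \<bullet> (M *\<^sub>v x))"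
        using psd_cs[OF M Ms Mpsd y x] by (simp add: mult.commute)
      have "y \<bullet> (M *\<^sub>v y) \<le> vnorm y * vnorm (M *\<^sub>v y)" using cs[OF y, of "M *\<^sub>v y"] M y by auto
      also have "\<dots> \<le> vnorm y * (K2 * vnorm y)" using K2(2)[OF y] vnorm_nonneg[of y]
        by (rule mult_left_mono)
      finally have yMy: "y \<bullet> (M *\<^sub>v y) \<le> K2 * (y \<bullet> y)"
        by (simp add: vnorm_sq[symmetric] power2_eq_square algebra_simps)
      have yy: "(y \<bullet> y)^2 \<le> K2 * (y \<bullet> y) * (x \<bullet> (M *\<^sub>v x))"
        using cs1 yMy Mpsd[OF x] unfolding y_def[symmetric]
        by (meson dual_order.trans mult_right_mono)
      have yy2: "y \<bullet> y \<le> K2 * (x \<bullet> (M *\<^sub>v x))"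
      proof (cases "y \<bullet> y = 0")
        case True thus ?thesis using K2 Mpsd[OF x] by simp
      next
        case False
        hence "y \<bullet> y > 0" using sp_self_nonneg[of y] by simp
        thus ?thesis using yy by (simp add: power2_eq_square mult.assoc)
      qed
      have "1 \<le> K1^2 * (K2 * (x \<bullet> (M *\<^sub>v x)))"
        using x1 yy2 by (meson dual_order.trans mult_left_mono zero_le_power2)
      also have "\<dots> \<le> K * (x \<bullet> (M *\<^sub>v x))" unfolding K_def using Mpsd[OF x]
        by (simp add: algebra_simps)
      finally have "1 / K \<le> x \<bullet> (M *\<^sub>v x)" using Kpos by (simp add: field_simps)
      thus ?thesis using xMx[OF x] xx by simp
    qed
    have "mu + 1 / K \<le> Inf Q"
      by (rule cInf_greatest[OF Qne], unfold Q_def, use key in auto)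
    hence "mu + 1 / K \<le> mu" unfolding mu_def .
    thus False using Kpos by simp
  qed
  have ev: "eigenvalue A mu" unfolding eigenvalue_det[OF A] using detM M_def by simp
  have ge: "mu \<le> k" if k: "eigenvalue A k" for k
  proof -
    obtain v where v: "eigenvector A v k" using k unfolding eigenvalue_def by auto
    hence v: "v \<in> carrier_vec n" "v \<noteq> 0\<^sub>v n" "A *\<^sub>v v = k \<cdot>\<^sub>v v" using A unfolding eigenvector_def by auto
    have "v \<bullet> (A *\<^sub>v v) = k * (v \<bullet> v)" using v by simp
    moreover have "0 < v \<bullet> (A *\<^sub>v v)" by (rule pdx[OF v(1) v(2)])
    moreover note mu_le[OF v(1)] sp_self_nonneg[of v]
    ultimately show ?thesis
      by (metis mult_right_le_imp_le linorder_not_le mult_eq_0_iff order_less_le less_eq_real_def)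
  qed
  have mupos: "0 < mu"
  proof -
    obtain v where v: "eigenvector A v mu" using ev unfolding eigenvalue_def by auto
    hence v: "v \<in> carrier_vec n" "v \<noteq> 0\<^sub>v n" "A *\<^sub>v v = mu \<cdot>\<^sub>v v" using A unfolding eigenvector_def by auto
    have "v \<bullet> (A *\<^sub>v v) = mu * (v \<bullet> v)" using v by simp
    moreover have "0 < v \<bullet> (A *\<^sub>v v)" by (rule pdx[OF v(1) v(2)])
    ultimately show ?thesis using sp_self_nonneg[of v] by (simp add: zero_less_mult_iff)
  qed
  have fin: "finite {k. eigenvalue A k}"
  proof -
    have "char_poly A \<noteq> 0" using degree_monic_char_poly[OF A] by auto
    hence "finite {k. poly (char_poly A) k = 0}" by (rule poly_roots_finite)
    thus ?thesis using eigenvalue_root_char_poly[OF A] by simp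
  qed
  have "lambda_min A = mu" unfolding lambda_min_def
    by (rule Min_eqI[OF fin], insert ge ev, auto)
  thus ?thesis using mupos mu_le by simp
qed

definition ext :: "nat set \<Rightarrow> nat \<Rightarrow> real vec \<Rightarrow> real vec" where
  "ext I n u = vec n (\<lambda>i. if i \<in> I then u $ (card {a\<in>I. a < i}) else 0)"

definition res :: "nat set \<Rightarrow> real vec \<Rightarrow> real vec" where
  "res I z = vec (card I) (\<lambda>k. z $ pick I k)"

lemma ext_carrier[simp]: "ext I n u \<in> carrier_vec n" unfolding ext_def by simp
lemma res_carrier[simp]: "res I z \<in> carrier_vec (card I)" unfolding res_def by simp
lemma dim_ext[simp]: "dim_vec (ext I n u) = n" unfolding ext_def by simp
lemma dim_res[simp]: "dim_vec (res I z) = card I" unfolding res_def by simp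

lemma card_lt_in: assumes fin: "finite (I::nat set)" and i: "i \<in> I" shows "card {a\<in>I. a < i} < card I"
proof (rule psubset_card_mono[OF fin])
  have "i \<notin> {a\<in>I. a < i}" by simp
  thus "{a\<in>I. a < i} \<subset> I" using i by blast
qed

lemma sum_pick:
  assumes fin: "finite I"
  shows "(\<Sum>k\<in>{0..<card I}. f (pick I k)) = (\<Sum>i\<in>I. f i)"
proof (rule sum.reindex_bij_witness[of _ "\<lambda>i. card {a\<in>I. a < i}" "pick I"])
  fix k assume "k \<in> {0..<card I}"
  hence k: "k < card I" by simp
  show "card {a\<in>I. a < pick I k} = k" using card_pick k by auto
  show "pick I k \<in> I" using pick_in_set k by auto
next
  fix i assume i: "i \<in> I"
  show "pick I (card {a\<in>I. a < i}) = i" using pick_card_in_set[OF i] .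
  show "card {a\<in>I. a < i} \<in> {0..<card I}" using card_lt_in[OF fin i] by simp
qed simp

lemma res_ext: assumes I: "I \<subseteq> {0..<n}" and u: "u \<in> carrier_vec (card I)"
  shows "res I (ext I n u) = u"
proof (rule eq_vecI)
  fix k assume "k < dim_vec u"
  hence k: "k < card I" using u by simp
  have p: "pick I k \<in> I" using pick_in_set k by auto
  hence "pick I k < n" using I by auto
  thus "res I (ext I n u) $ k = u $ k"
    unfolding res_def ext_def using k card_pick[of k I] p by auto
qed (use u in auto)

lemma res_ext_disj: assumes J: "J \<subseteq> {0..<n}" and d: "I \<inter> J = {}"
  shows "res J (ext I n u) = 0\<^sub>v (card J)"
proof (rule eq_vecI)
  fix k assume "k < dim_vec (0\<^sub>v (card J))"
  hence k: "k < card J" by simp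
  have p: "pick J k \<in> J" using pick_in_set k by auto
  hence "pick J k < n" "pick J k \<notin> I" using J d by auto
  thus "res J (ext I n u) $ k = 0\<^sub>v (card J) $ k"
    unfolding res_def ext_def using k by auto
qed auto

lemma res_add: assumes d: "dim_vec x = dim_vec y" and I: "I \<subseteq> {0..<dim_vec y}"
  shows "res I (x + y) = res I x + res I y"
proof (rule eq_vecI)
  fix k assume "k < dim_vec (res I x + res I y)"
  hence k: "k < card I" by simp
  have "pick I k < dim_vec y" using pick_in_set[of k I] k I by auto
  thus "res I (x + y) $ k = (res I x + res I y) $ k" unfolding res_def using k d by simp
qed simp

lemma res_smult: assumes I: "I \<subseteq> {0..<dim_vec y}"
  shows "res I (c \<cdot>\<^sub>v y) = c \<cdot>\<^sub>v res I y"
proof (rule eq_vecI)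
  fix k assume "k < dim_vec (c \<cdot>\<^sub>v res I y)"
  hence k: "k < card I" by simp
  have "pick I k < dim_vec y" using pick_in_set[of k I] k I by auto
  thus "res I (c \<cdot>\<^sub>v y) $ k = (c \<cdot>\<^sub>v res I y) $ k" unfolding res_def using k by simp
qed simp

lemma sum_ext:
  assumes I: "I \<subseteq> {0..<n}"
  shows "(\<Sum>i\<in>{0..<n}. f i * ext I n u $ i) = (\<Sum>k\<in>{0..<card I}. f (pick I k) * u $ k)"
proof -
  have fin: "finite I" using I finite_subset by blast
  have "(\<Sum>i\<in>{0..<n}. f i * ext I n u $ i) = (\<Sum>i\<in>{0..<n}. if i \<in> I then f i * u $ (card {a\<in>I. a < i}) else 0)"
    unfolding ext_def by (rule sum.cong) auto
  also have "\<dots> = (\<Sum>i\<in>I. f i * u $ (card {a\<in>I. a < i}))"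
    using I by (simp add: sum.If_cases Int_absorb1)
  also have "\<dots> = (\<Sum>k\<in>{0..<card I}. f (pick I k) * u $ (card {a\<in>I. a < pick I k}))"
    using sum_pick[OF fin, of "\<lambda>i. f i * u $ (card {a\<in>I. a < i})"] by simp
  also have "\<dots> = (\<Sum>k\<in>{0..<card I}. f (pick I k) * u $ k)"
    by (rule sum.cong, auto simp: card_pick)
  finally show ?thesis .
qed

lemma ext_sp: assumes I: "I \<subseteq> {0..<n}" and z: "z \<in> carrier_vec n"
  shows "ext I n x \<bullet> z = x \<bullet> res I z"
proof -
  have "ext I n x \<bullet> z = (\<Sum>i\<in>{0..<n}. z $ i * ext I n x $ i)"
    using z unfolding scalar_prod_def by (simp add: mult.commute)
  also have "\<dots> = (\<Sum>k\<in>{0..<card I}. z $ (pick I k) * x $ k)" by (rule sum_ext[OF I])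
  also have "\<dots> = x \<bullet> res I z" unfolding scalar_prod_def res_def by (simp add: mult.commute)
  finally show ?thesis .
qed

lemma ext_ext_sp: assumes I: "I \<subseteq> {0..<n}" and y: "y \<in> carrier_vec (card I)"
  shows "ext I n x \<bullet> ext I n y = x \<bullet> y"
  using ext_sp[OF I, of "ext I n y" x] res_ext[OF I y] by simp

lemma res_norm: assumes I: "I \<subseteq> {0..<n}" and z: "z \<in> carrier_vec n"
  shows "res I z \<bullet> res I z \<le> z \<bullet> z"
proof -
  have fin: "finite I" using I finite_subset by blast
  have "res I z \<bullet> res I z = (\<Sum>k\<in>{0..<card I}. z $ pick I k * z $ pick I k)"
    unfolding scalar_prod_def res_def by simp
  also have "\<dots> = (\<Sum>i\<in>I. z $ i * z $ i)" by (rule sum_pick[OF fin])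
  also have "\<dots> \<le> (\<Sum>i\<in>{0..<n}. z $ i * z $ i)" by (rule sum_mono2, use I in auto)
  also have "\<dots> = z \<bullet> z" using z unfolding scalar_prod_def by simp
  finally show ?thesis .
qed

lemma sub_card: "I \<subseteq> {0..<n} \<Longrightarrow> {i. i < n \<and> i \<in> I} = I" by auto

lemma submatrix_carrier': assumes M: "M \<in> carrier_mat n n" and I: "I \<subseteq> {0..<n}" and J: "J \<subseteq> {0..<n}"
  shows "submatrix M I J \<in> carrier_mat (card I) (card J)"
  using M sub_card[OF I] sub_card[OF J] unfolding submatrix_def by auto

lemma submatrix_mult:
  assumes M: "M \<in> carrier_mat n n" and I: "I \<subseteq> {0..<n}" and J: "J \<subseteq> {0..<n}"
    and q: "q \<in> carrier_vec (card J)"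
  shows "submatrix M I J *\<^sub>v q = res I (M *\<^sub>v ext J n q)"
proof (rule eq_vecI)
  have sm: "submatrix M I J \<in> carrier_mat (card I) (card J)" by (rule submatrix_carrier'[OF M I J])
  show "dim_vec (submatrix M I J *\<^sub>v q) = dim_vec (res I (M *\<^sub>v ext J n q))" using sm by simp
  fix k assume "k < dim_vec (res I (M *\<^sub>v ext J n q))"
  hence k: "k < card I" by simp
  have p: "pick I k < n" using pick_in_set[of k I] k I by auto
  have "res I (M *\<^sub>v ext J n q) $ k = (\<Sum>i\<in>{0..<n}. M $$ (pick I k, i) * ext J n q $ i)"
    unfolding res_def using k p M by (simp add: scalar_prod_def row_def)
  also have "\<dots> = (\<Sum>j\<in>{0..<card J}. M $$ (pick I k, pick J j) * q $ j)" by (rule sum_ext[OF J])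
  also have "\<dots> = (submatrix M I J *\<^sub>v q) $ k"
    using sm k q by (simp add: scalar_prod_def row_def submatrix_index[of k M I, symmetric]
        sub_card[OF I] sub_card[OF J] M[THEN carrier_matD(1)] M[THEN carrier_matD(2)])
  finally show "(submatrix M I J *\<^sub>v q) $ k = res I (M *\<^sub>v ext J n q) $ k" by simp
qed

lemma split_vec:
  assumes U: "S \<union> S' = {0..<n}" and D: "S \<inter> S' = {}" and z: "z \<in> carrier_vec n"
  shows "z = ext S n (res S z) + ext S' n (res S' z)"
proof (rule eq_vecI)
  fix i assume "i < dim_vec (ext S n (res S z) + ext S' n (res S' z))"
  hence i: "i < n" by simp
  have finS: "finite S" "finite S'" using U by (metis finite_Un finite_atLeastLessThan)+
  show "z $ i = (ext S n (res S z) + ext S' n (res S' z)) $ i"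
  proof (cases "i \<in> S")
    case True
    hence "i \<notin> S'" using D by auto
    thus ?thesis using True i card_lt_in[OF finS(1) True] pick_card_in_set[OF True]
      unfolding ext_def res_def by simp
  next
    case False
    hence T: "i \<in> S'" using U i by auto
    thus ?thesis using False i card_lt_in[OF finS(2) T] pick_card_in_set[OF T]
      unfolding ext_def res_def by simp
  qed
qed (use z in simp)

lemma sp_pos: assumes x: "x \<in> carrier_vec n" and nz: "x \<noteq> 0\<^sub>v n" shows "0 < (x::real vec) \<bullet> x"
proof -
  obtain i where i: "i < n" "x $ i \<noteq> 0" using nz x by (metis eq_vecI carrier_vecD index_zero_vec(1) index_zero_vec(2))
  have "0 < (\<Sum>j\<in>{0..<n}. x $ j * x $ j)"
    by (rule sum_pos2[of _ i], use i in \<open>auto simp: zero_less_mult_iff linorder_neq_iff\<close>)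
  thus ?thesis using x unfolding scalar_prod_def by simp
qed

lemma div_bound: fixes a b c :: real
  assumes "0 \<le> a" "0 \<le> b" "c * a^2 \<le> a * b" shows "c * a \<le> b"
proof (cases "a = 0")
  case True thus ?thesis using assms by simp
next
  case False
  hence "a > 0" using assms by simp
  thus ?thesis using assms(3) by (simp add: power2_eq_square)
qed

lemma sym_plus_id: assumes C: "C \<in> carrier_mat n n" and s: "sym_mat C"
  shows "sym_mat (C + (lam::real) \<cdot>\<^sub>m 1\<^sub>m n)"
  using s C unfolding sym_mat_def
  by (subst transpose_add[of _ n n], auto intro!: eq_matI)

lemma plus_id_mult: assumes C: "C \<in> carrier_mat n n" and x: "x \<in> carrier_vec n"
  shows "(C + (lam::real) \<cdot>\<^sub>m 1\<^sub>m n) *\<^sub>v x = C *\<^sub>v x + lam \<cdot>\<^sub>v x"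
  using C x by (simp add: add_mult_distrib_mat_vec[of C n n] smult_one_mat_vec)

theorem lemma1:
  fixes C :: "real mat" and N :: nat and S S' :: "nat set"
  assumes C: "C \<in> carrier_mat N N" "pos_def C"
    and part: "S \<union> S' = {0..<N}" "S \<inter> S' = {}" "S \<noteq> {}" "S' \<noteq> {}"
    and subpd: "pos_def (submatrix C S S)" "pos_def (submatrix C S' S')"
    and theta: "spec_norm (submatrix C S S') ^ 2
                  / (lambda_min (submatrix C S S) * lambda_min (submatrix C S' S')) < 1"
  shows "\<forall>lam::real. lam > 0 \<longrightarrow>
           spec_norm (R_S C S lam)
             \<le> spec_norm (submatrix C S S') ^ 2
                / ((1 - spec_norm (submatrix C S S') ^ 2
                        / (lambda_min (submatrix C S S) * lambda_min (submatrix C S' S')))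
                   * (lambda_min C + lam) ^ 3)"
proof (intro allI impI)
  fix lam :: real assume lam: "lam > 0"
  have SN: "S \<subseteq> {0..<N}" "S' \<subseteq> {0..<N}" using part(1) by auto
  have finS: "finite S" "finite S'" using SN finite_subset by blast+
  have cS: "card S > 0" "card S' > 0" using finS part(3,4) card_gt_0_iff by blast+
  have N: "0 < N" using SN part(3) by auto
  have Cs: "sym_mat C" using C(2) unfolding pos_def_def by auto
  define m where "m = lambda_min C"
  from rayleigh[OF C(1) C(2) N, folded m_def]
  have m: "0 < m" "\<And>x. x\<in>carrier_vec N \<Longrightarrow> m*(x \<bullet> x) \<le> x \<bullet> (C *\<^sub>v x)" by auto
  define A where "A = submatrix C S S"
  define D where "D = submatrix C S' S'"
  define B where "B = submatrix C S S'"
  have A: "A \<in> carrier_mat (card S) (card S)" unfolding A_def by (rule submatrix_carrier'[OF C(1) SN(1) SN(1)])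
  have D: "D \<in> carrier_mat (card S') (card S')" unfolding D_def by (rule submatrix_carrier'[OF C(1) SN(2) SN(2)])
  have B: "B \<in> carrier_mat (card S) (card S')" unfolding B_def by (rule submatrix_carrier'[OF C(1) SN(1) SN(2)])
  define a where "a = lambda_min A"
  define d where "d = lambda_min D"
  have a: "0 < a" using rayleigh[OF A subpd(1)[folded A_def] cS(1)] unfolding a_def by auto
  have d: "0 < d" using rayleigh[OF D subpd(2)[folded D_def] cS(2)] unfolding d_def by auto
  define nb where "nb = spec_norm B"
  have nb: "0 \<le> nb"
  proof -
    have "0 \<le> vnorm (B *\<^sub>v unit_vec (card S') 0)" by (rule vnorm_nonneg)
    also have "\<dots> \<le> nb * vnorm (unit_vec (card S') 0)" unfolding nb_def
      by (rule spec_norm_bound[OF B], simp)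
    finally show ?thesis using vnorm_unit_vec[OF cS(2)] by simp
  qed
  define th where "th = nb^2 / (a * d)"
  have th: "0 \<le> th" "th < 1" using a d nb theta unfolding th_def nb_def a_def d_def A_def B_def D_def
    by auto
  define c where "c = m + lam"
  have c: "0 < c" unfolding c_def using m lam by simp
  define Cl where "Cl = C + lam \<cdot>\<^sub>m 1\<^sub>m N"
  have Cl: "Cl \<in> carrier_mat N N" unfolding Cl_def using C by simp
  have Cls: "sym_mat Cl" unfolding Cl_def by (rule sym_plus_id[OF C(1) Cs])
  have Clx: "Cl *\<^sub>v x = C *\<^sub>v x + lam \<cdot>\<^sub>v x" if "x \<in> carrier_vec N" for x
    unfolding Cl_def by (rule plus_id_mult[OF C(1) that])
  have Clq: "c * (x \<bullet> x) \<le> x \<bullet> (Cl *\<^sub>v x)" if x: "x \<in> carrier_vec N" for x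
  proof -
    have "x \<bullet> (Cl *\<^sub>v x) = x \<bullet> (C *\<^sub>v x) + lam * (x \<bullet> x)"
      using x C(1) by (simp add: Clx scalar_prod_add_distrib[of x N])
    thus ?thesis using m(2)[OF x] unfolding c_def by (simp add: algebra_simps)
  qed
  define Al where "Al = A + lam \<cdot>\<^sub>m 1\<^sub>m (card S)"
  have Al: "Al \<in> carrier_mat (card S) (card S)" unfolding Al_def using A by simp
  have resCl: "res I (Cl *\<^sub>v ext J N h) = submatrix C I J *\<^sub>v h + lam \<cdot>\<^sub>v res I (ext J N h)"
    if I: "I \<subseteq> {0..<N}" and J: "J \<subseteq> {0..<N}" and h: "h \<in> carrier_vec (card J)" for I J h
  proof -
    have "res I (Cl *\<^sub>v ext J N h) = res I (C *\<^sub>v ext J N h) + res I (lam \<cdot>\<^sub>v ext J N h)"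
      unfolding Clx[OF ext_carrier] using I C(1) by (intro res_add) auto
    also have "\<dots> = submatrix C I J *\<^sub>v h + lam \<cdot>\<^sub>v res I (ext J N h)"
      using submatrix_mult[OF C(1) I J h] res_smult[of I "ext J N h" lam] I by simp
    finally show ?thesis .
  qed
  have Alh: "Al *\<^sub>v h = res S (Cl *\<^sub>v ext S N h)" if h: "h \<in> carrier_vec (card S)" for h
    unfolding Al_def resCl[OF SN(1) SN(1) h] res_ext[OF SN(1) h] A_def[symmetric]
    using A h by (rule plus_id_mult)
  have Bq: "B *\<^sub>v q = res S (Cl *\<^sub>v ext S' N q)" if q: "q \<in> carrier_vec (card S')" for q
  proof -
    have "res S (Cl *\<^sub>v ext S' N q) = submatrix C S S' *\<^sub>v q + lam \<cdot>\<^sub>v res S (ext S' N q)"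
      by (rule resCl[OF SN(1) SN(2) q])
    also have "res S (ext S' N q) = 0\<^sub>v (card S)" by (rule res_ext_disj[OF SN(1)]) (use part(2) in blast)
    also have "submatrix C S S' *\<^sub>v q + lam \<cdot>\<^sub>v 0\<^sub>v (card S) = B *\<^sub>v q"
    proof -
      have "lam \<cdot>\<^sub>v 0\<^sub>v (card S) = 0\<^sub>v (card S)" by (intro eq_vecI) auto
      thus ?thesis unfolding B_def[symmetric] using B q by simp
    qed
    finally show ?thesis by simp
  qed
  have Alq: "c * (h \<bullet> h) \<le> h \<bullet> (Al *\<^sub>v h)" if h: "h \<in> carrier_vec (card S)" for h
  proof -
    have "h \<bullet> (Al *\<^sub>v h) = ext S N h \<bullet> (Cl *\<^sub>v ext S N h)"
      unfolding Alh[OF h] using ext_sp[OF SN(1), of "Cl *\<^sub>v ext S N h" h] Cl by simp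
    moreover have "ext S N h \<bullet> ext S N h = h \<bullet> h" by (rule ext_ext_sp[OF SN(1) h])
    ultimately show ?thesis using Clq[OF ext_carrier, of S h] by simp
  qed
  have detCl: "det Cl \<noteq> 0"
  proof
    assume "det Cl = 0"
    then obtain v where v: "v \<in> carrier_vec N" "v \<noteq> 0\<^sub>v N" "Cl *\<^sub>v v = 0\<^sub>v N"
      using det_0_iff_vec_prod_zero_field[OF Cl] by auto
    have "c * (v \<bullet> v) \<le> 0" using Clq[OF v(1)] v(3) v(1) by simp
    thus False using sp_pos[OF v(1) v(2)] c by (simp add: mult_le_0_iff)
  qed
  have detAl: "det Al \<noteq> 0"
  proof
    assume "det Al = 0"
    then obtain v where v: "v \<in> carrier_vec (card S)" "v \<noteq> 0\<^sub>v (card S)" "Al *\<^sub>v v = 0\<^sub>v (card S)"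
      using det_0_iff_vec_prod_zero_field[OF Al] by auto
    have "c * (v \<bullet> v) \<le> 0" using Alq[OF v(1)] v(3) v(1) by simp
    thus False using sp_pos[OF v(1) v(2)] c by (simp add: mult_le_0_iff)
  qed
  define G where "G = mat_inv Cl"
  define H where "H = mat_inv Al"
  have G: "G \<in> carrier_mat N N" "Cl * G = 1\<^sub>m N" using inv_exists[OF Cl detCl] unfolding G_def by auto
  have H: "H \<in> carrier_mat (card S) (card S)" "Al * H = 1\<^sub>m (card S)" "H * Al = 1\<^sub>m (card S)"
    using inv_exists[OF Al detAl] unfolding H_def by auto
  define GS where "GS = submatrix G S S"
  have GS: "GS \<in> carrier_mat (card S) (card S)" unfolding GS_def by (rule submatrix_carrier'[OF G(1) SN(1) SN(1)])
  have RS: "R_S C S lam = H - GS"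
    unfolding R_S_def H_def GS_def G_def Al_def A_def Cl_def using C(1) by simp
  have Hb: "c * vnorm (H *\<^sub>v y) \<le> vnorm y" if y: "y \<in> carrier_vec (card S)" for y
  proof -
    define h where "h = H *\<^sub>v y"
    have h: "h \<in> carrier_vec (card S)" unfolding h_def using H y by simp
    have "Al *\<^sub>v h = y" unfolding h_def using H Al y
      by (simp add: assoc_mult_mat_vec[symmetric, of Al _ _ H])
    hence "c * (h \<bullet> h) \<le> h \<bullet> y" using Alq[OF h] by simp
    also have "\<dots> \<le> vnorm h * vnorm y" using cs[OF h y] by simp
    finally have "c * vnorm h ^ 2 \<le> vnorm h * vnorm y" by (simp add: vnorm_sq)
    thus ?thesis unfolding h_def[symmetric] by (rule div_bound[OF vnorm_nonneg vnorm_nonneg])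
  qed
  have main: "c^3 * vnorm ((H - GS) *\<^sub>v u) \<le> nb^2 * vnorm u" if u: "u \<in> carrier_vec (card S)" for u
  proof -
    define eu where "eu = ext S N u"
    have eu: "eu \<in> carrier_vec N" unfolding eu_def by simp
    define z where "z = G *\<^sub>v eu"
    have z: "z \<in> carrier_vec N" unfolding z_def using G eu by simp
    have Clz: "Cl *\<^sub>v z = eu" unfolding z_def using G Cl eu
      by (simp add: assoc_mult_mat_vec[symmetric, of Cl _ _ G])
    define p where "p = res S z"
    define q where "q = res S' z"
    have p: "p \<in> carrier_vec (card S)" and q: "q \<in> carrier_vec (card S')" unfolding p_def q_def by auto
    have zs: "z = ext S N p + ext S' N q" unfolding p_def q_def by (rule split_vec[OF part(1,2) z])
    have Clzs: "Cl *\<^sub>v z = Cl *\<^sub>v ext S N p + Cl *\<^sub>v ext S' N q"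
      by (subst zs, rule mult_add_distrib_mat_vec[OF Cl], auto)
    have Ru: "(H - GS) *\<^sub>v u = H *\<^sub>v u - p"
    proof -
      have "GS *\<^sub>v u = p" unfolding GS_def p_def z_def eu_def by (rule submatrix_mult[OF G(1) SN(1) SN(1) u])
      thus ?thesis using H GS u by (simp add: minus_mult_distrib_mat_vec)
    qed
    have eq1: "u = Al *\<^sub>v p + B *\<^sub>v q"
    proof -
      have "u = res S (Cl *\<^sub>v z)" unfolding Clz eu_def by (rule res_ext[OF SN(1) u, symmetric])
      also have "\<dots> = res S (Cl *\<^sub>v ext S N p) + res S (Cl *\<^sub>v ext S' N q)"
        unfolding Clzs using Cl SN by (intro res_add) auto
      finally show ?thesis using Alh[OF p] Bq[OF q] by simp
    qed
    have Hu: "H *\<^sub>v u = p + H *\<^sub>v (B *\<^sub>v q)"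
    proof -
      have "H *\<^sub>v u = H *\<^sub>v (Al *\<^sub>v p) + H *\<^sub>v (B *\<^sub>v q)"
        by (subst eq1, rule mult_add_distrib_mat_vec[OF H(1)], use Al p B q in auto)
      also have "H *\<^sub>v (Al *\<^sub>v p) = p" using H Al p
        by (simp add: assoc_mult_mat_vec[symmetric, of H _ _ Al])
      finally show ?thesis .
    qed
    have Ru2: "(H - GS) *\<^sub>v u = H *\<^sub>v (B *\<^sub>v q)"
      unfolding Ru Hu using p H B q by auto
    have Bqc: "B *\<^sub>v q \<in> carrier_vec (card S)" using B q by simp
    have b1: "c * vnorm ((H - GS) *\<^sub>v u) \<le> nb * vnorm q"
      unfolding Ru2 using Hb[OF Bqc] spec_norm_bound[OF B q, folded nb_def] by linarith
    have b2: "c * vnorm q \<le> nb * vnorm p"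
    proof -
      have "ext S' N q \<bullet> eu = q \<bullet> res S' eu" by (rule ext_sp[OF SN(2) eu])
      also have "res S' eu = 0\<^sub>v (card S')" unfolding eu_def by (rule res_ext_disj[OF SN(2) part(2)])
      also have "q \<bullet> 0\<^sub>v (card S') = 0" using q by (simp add: scalar_prod_def)
      finally have "ext S' N q \<bullet> eu = 0" .
      hence "ext S' N q \<bullet> (Cl *\<^sub>v ext S N p) + ext S' N q \<bullet> (Cl *\<^sub>v ext S' N q) = 0"
      proof -
        have "ext S' N q \<bullet> (Cl *\<^sub>v ext S N p + Cl *\<^sub>v ext S' N q)
          = ext S' N q \<bullet> (Cl *\<^sub>v ext S N p) + ext S' N q \<bullet> (Cl *\<^sub>v ext S' N q)"
          by (rule scalar_prod_add_distrib[of _ N]) (use Cl in auto)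
        thus ?thesis using Clz Clzs \<open>ext S' N q \<bullet> eu = 0\<close> by simp
      qed
      moreover have "ext S' N q \<bullet> (Cl *\<^sub>v ext S N p) = p \<bullet> (B *\<^sub>v q)"
        unfolding sym_quad[OF Cl Cls ext_carrier ext_carrier] Bq[OF q]
        using ext_sp[OF SN(1), of "Cl *\<^sub>v ext S' N q" p] Cl by simp
      moreover have "c * (q \<bullet> q) \<le> ext S' N q \<bullet> (Cl *\<^sub>v ext S' N q)"
        using Clq[OF ext_carrier, of S' q] ext_ext_sp[OF SN(2) q] by simp
      ultimately have "c * (q \<bullet> q) \<le> - (p \<bullet> (B *\<^sub>v q))" by linarith
      also have "\<dots> \<le> vnorm p * vnorm (B *\<^sub>v q)" using cs[OF p Bqc] by linarith
      also have "\<dots> \<le> vnorm p * (nb * vnorm q)"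
        by (rule mult_left_mono[OF spec_norm_bound[OF B q, folded nb_def] vnorm_nonneg])
      finally have "c * vnorm q ^ 2 \<le> vnorm q * (nb * vnorm p)" by (simp add: vnorm_sq algebra_simps)
      thus ?thesis by (rule div_bound[OF vnorm_nonneg mult_nonneg_nonneg[OF nb vnorm_nonneg]])
    qed
    have b3: "c * vnorm p \<le> vnorm u"
    proof -
      have "c * (p \<bullet> p) \<le> c * (z \<bullet> z)" unfolding p_def using res_norm[OF SN(1) z] c by simp
      also have "\<dots> \<le> z \<bullet> (Cl *\<^sub>v z)" by (rule Clq[OF z])
      also have "\<dots> = u \<bullet> p" unfolding Clz using comm_scalar_prod[OF z eu] ext_sp[OF SN(1) z, of u]
        unfolding eu_def p_def by simp
      also have "\<dots> \<le> vnorm p * vnorm u" using cs[OF u p] by (simp add: mult.commute)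
      finally have "c * vnorm p ^ 2 \<le> vnorm p * vnorm u" by (simp add: vnorm_sq)
      thus ?thesis by (rule div_bound[OF vnorm_nonneg vnorm_nonneg])
    qed
    have "c^3 * vnorm ((H - GS) *\<^sub>v u) = c^2 * (c * vnorm ((H - GS) *\<^sub>v u))" by (simp add: power3_eq_cube power2_eq_square)
    also have "\<dots> \<le> c^2 * (nb * vnorm q)" using b1 c by simp
    also have "\<dots> = c * nb * (c * vnorm q)" by (simp add: power2_eq_square)
    also have "\<dots> \<le> c * nb * (nb * vnorm p)" using b2 c nb by (simp add: mult_left_mono)
    also have "\<dots> = nb^2 * (c * vnorm p)" by (simp add: power2_eq_square)
    also have "\<dots> \<le> nb^2 * vnorm u" using b3 by (simp add: mult_left_mono)
    finally show ?thesis .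
  qed
  have "spec_norm (H - GS) \<le> nb^2 / c^3"
  proof (rule spec_norm_le[OF _ cS(1)])
    show "H - GS \<in> carrier_mat (card S) (card S)" using GS by (rule minus_carrier_mat)
    fix x assume x: "x \<in> carrier_vec (card S)" "vnorm x = 1"
    show "vnorm ((H - GS) *\<^sub>v x) \<le> nb^2 / c^3" using main[OF x(1)] x(2) c
      by (simp add: field_simps)
  qed
  also have "\<dots> \<le> nb^2 / ((1 - th) * c^3)"
    by (rule divide_left_mono, use th c in auto)
  finally show "spec_norm (R_S C S lam) \<le> spec_norm (submatrix C S S') ^ 2
                / ((1 - spec_norm (submatrix C S S') ^ 2
                        / (lambda_min (submatrix C S S) * lambda_min (submatrix C S' S')))
                   * (lambda_min C + lam) ^ 3)"
    unfolding RS th_def nb_def a_def d_def c_def m_def A_def B_def D_def .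
qed

end
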